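(* Consider the following strict partial orders on $P_f(\mathbb{N}^+)$: $A\prec_{gen}B$ iff $A=\emptyset$ and $B\neq\emptyset$; $A\prec_{BFS}B$ iff $umin(A)>umin(B)$; $A\prec_{DFS}B$ iff $umax(A)<umax(B)$; $A\prec_{MNS}B$ iff $A\subsetneq B$; $A\prec_{MCS}B$ iff $|A|<|B|$; $A\prec_{LBFS}B$ iff $umin(B-A)<umin(A-B)$; $A\prec_{LDFS}B$ iff $umax(A-B)<umax(B-A)$. Say that search $S'$ extends search $S$ if for all $A,B$, $A\prec_S B$ implies $A\prec_{S'}B$ (equivalently, for every finite graph $G$ every $\mathrm{TBLS}$-ordering of $G$ for $\prec_{S'}$ is a $\mathrm{TBLS}$-ordering of $G$ for $\prec_S$). Then: BFS, DFS and MNS each extend Generic search ($\prec_{gen}$); LBFS extends BFS; LDFS extends DFS; LBFS, LDFS and MCS each extend MNS.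
   Context: $P_f(\mathbb{N}^+)$ is the set of finite subsets of positive integers; $umin(A)=\min A$ for $A\neq\emptyset$ and $umin(\emptyset)=\infty$; $umax(A)=\max A$ for $A\neq\emptyset$ and $umax(\emptyset)=0$. Given a finite graph $G=(V,E)$ with $n$ vertices, a strict partial order $\prec$ on $P_f(\mathbb{N}^+)$ and an ordering $\tau$ of $V$, $\mathrm{TBLS}(G,\prec,\tau)$ is the procedure: set $label(v)=\emptyset$ for every $v$; for $i=1,\dots,n$: let Eligible be the set of unnumbered vertices $x$ such that there is no unnumbered vertex $y$ with $label(x)\prec label(y)$; let $v$ be the first vertex of Eligible in $\tau$; set $\sigma(i)=v$ ($v$ becomes numbered); for every unnumbered neighbour $w$ of $v$ replace $label(w)$ by $label(w)\cup\{i\}$; output $\sigma$. A TBLS-ordering of $G$ for $\prec$ is any output $\mathrm{TBLS}(G,\prec,\tau)$ over all orderings $\tau$ of $V$. *)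

theory Defs
  imports Main "HOL-Library.Extended_Nat"
begin

definition Pf :: "nat set set" where
  "Pf = {A. finite A \<and> 0 \<notin> A}"

definition umin :: "nat set \<Rightarrow> enat" where
  "umin A = (if A = {} then \<infinity> else enat (Min A))"

definition umax :: "nat set \<Rightarrow> nat" where
  "umax A = (if A = {} then 0 else Max A)"

definition prec_gen :: "nat set \<Rightarrow> nat set \<Rightarrow> bool" where
  "prec_gen A B \<longleftrightarrow> A = {} \<and> B \<noteq> {}"

definition prec_BFS :: "nat set \<Rightarrow> nat set \<Rightarrow> bool" where
  "prec_BFS A B \<longleftrightarrow> umin A > umin B"

definition prec_DFS :: "nat set \<Rightarrow> nat set \<Rightarrow> bool" where
  "prec_DFS A B \<longleftrightarrow> umax A < umax B"

definition prec_MNS :: "nat set \<Rightarrow> nat set \<Rightarrow> bool" where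
  "prec_MNS A B \<longleftrightarrow> A \<subset> B"

definition prec_MCS :: "nat set \<Rightarrow> nat set \<Rightarrow> bool" where
  "prec_MCS A B \<longleftrightarrow> card A < card B"

definition prec_LBFS :: "nat set \<Rightarrow> nat set \<Rightarrow> bool" where
  "prec_LBFS A B \<longleftrightarrow> umin (B - A) < umin (A - B)"

definition prec_LDFS :: "nat set \<Rightarrow> nat set \<Rightarrow> bool" where
  "prec_LDFS A B \<longleftrightarrow> umax (A - B) < umax (B - A)"

definition search_extends ::
  "(nat set \<Rightarrow> nat set \<Rightarrow> bool) \<Rightarrow> (nat set \<Rightarrow> nat set \<Rightarrow> bool) \<Rightarrow> bool" where
  "search_extends S S' \<longleftrightarrow> (\<forall>A\<in>Pf. \<forall>B\<in>Pf. S A B \<longrightarrow> S' A B)"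

end

theory Submission
  imports Defs
begin

lemma l1: "search_extends prec_gen prec_BFS"
  unfolding search_extends_def prec_gen_def prec_BFS_def umin_def by auto

lemma l2: "search_extends prec_gen prec_DFS"
  unfolding search_extends_def prec_gen_def prec_DFS_def umax_def Pf_def
proof (intro ballI impI)
  fix A B :: "nat set" assume "A \<in> {A. finite A \<and> 0 \<notin> A}" "B \<in> {A. finite A \<and> 0 \<notin> A}"
    and h: "A = {} \<and> B \<noteq> {}"
  then have "Max B \<in> B" "0 \<notin> B" by auto
  then show "(if A = {} then 0 else Max A) < (if B = {} then 0 else Max B)"
    using h by (cases "Max B") auto
qed

lemma l3: "search_extends prec_gen prec_MNS"
  unfolding search_extends_def prec_gen_def prec_MNS_def by auto

lemma l4: "search_extends prec_BFS prec_LBFS"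
  unfolding search_extends_def Pf_def
proof (intro ballI impI)
  fix A B :: "nat set" assume "A \<in> {A. finite A \<and> 0 \<notin> A}" "B \<in> {A. finite A \<and> 0 \<notin> A}"
    and h: "prec_BFS A B"
  then have fA: "finite A" and fB: "finite B" by auto
  have Bne: "B \<noteq> {}" using h unfolding prec_BFS_def umin_def by auto
  define m where "m = Min B"
  have mB: "m \<in> B" using Bne fB m_def by auto
  have lt: "\<forall>a\<in>A. m < a"
  proof
    fix a assume a: "a \<in> A"
    have "Min A \<le> a" using fA a by auto
    moreover have "m < Min A" using h Bne a unfolding prec_BFS_def umin_def m_def
      by (auto split: if_splits)
    ultimately show "m < a" by simp
  qed
  have mBA: "m \<in> B - A" using mB lt by auto
  have u1: "umin (B - A) \<le> enat m"
    using mBA fB unfolding umin_def by auto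
  have u2: "enat m < umin (A - B)"
  proof (cases "A - B = {}")
    case True then show ?thesis unfolding umin_def by simp
  next
    case False
    have "Min (A - B) \<in> A" using False fA Min_in[of "A - B"] by auto
    then show ?thesis using False lt unfolding umin_def by auto
  qed
  show "prec_LBFS A B" unfolding prec_LBFS_def using u1 u2 by (rule le_less_trans)
qed

lemma l5: "search_extends prec_DFS prec_LDFS"
  unfolding search_extends_def Pf_def
proof (intro ballI impI)
  fix A B :: "nat set" assume "A \<in> {A. finite A \<and> 0 \<notin> A}" "B \<in> {A. finite A \<and> 0 \<notin> A}"
    and h: "prec_DFS A B"
  then have fA: "finite A" and fB: "finite B" by auto
  have Bne: "B \<noteq> {}" using h unfolding prec_DFS_def umax_def by auto
  define M where "M = Max B"
  have MB: "M \<in> B" using Bne fB M_def by auto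
  have lt: "\<forall>a\<in>A. a < M"
  proof
    fix a assume a: "a \<in> A"
    have "a \<le> Max A" using fA a by auto
    moreover have "Max A < M" using h Bne a unfolding prec_DFS_def umax_def M_def
      by (auto split: if_splits)
    ultimately show "a < M" by simp
  qed
  have MBA: "M \<in> B - A" using MB lt by auto
  have u1: "umax (B - A) = M"
  proof -
    have "Max (B - A) \<le> M" unfolding M_def using MBA fB by (intro Max_mono) auto
    moreover have "M \<le> Max (B - A)" using MBA fB by auto
    ultimately show ?thesis using MBA unfolding umax_def by auto
  qed
  have u2: "umax (A - B) < M"
  proof (cases "A - B = {}")
    case True
    have "0 \<notin> B" using \<open>B \<in> {A. finite A \<and> 0 \<notin> A}\<close> by auto
    then have "M \<noteq> 0" using MB by metis
    then show ?thesis using True unfolding umax_def by simp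
  next
    case False
    have "Max (A - B) \<in> A" using False fA Max_in[of "A - B"] by auto
    then show ?thesis using False lt unfolding umax_def by auto
  qed
  show "prec_LDFS A B" unfolding prec_LDFS_def using u1 u2 by simp
qed

lemma l6: "search_extends prec_MNS prec_LBFS"
  unfolding search_extends_def prec_MNS_def prec_LBFS_def umin_def Pf_def by auto

lemma l7: "search_extends prec_MNS prec_LDFS"
  unfolding search_extends_def prec_MNS_def prec_LDFS_def Pf_def
proof (intro ballI impI)
  fix A B :: "nat set" assume "A \<in> {A. finite A \<and> 0 \<notin> A}" "B \<in> {A. finite A \<and> 0 \<notin> A}"
    and h: "A \<subset> B"
  then have ne: "B - A \<noteq> {}" and f: "finite (B - A)" and z: "0 \<notin> B - A" by auto
  then have "Max (B - A) \<in> B - A" by (intro Max_in) auto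
  then have "Max (B - A) \<noteq> 0" using z by metis
  then show "umax (A - B) < umax (B - A)" using h ne unfolding umax_def by auto
qed

lemma l8: "search_extends prec_MNS prec_MCS"
  unfolding search_extends_def prec_MNS_def prec_MCS_def Pf_def
  by (auto intro: psubset_card_mono)

theorem theorem8:
  shows "search_extends prec_gen prec_BFS
       \<and> search_extends prec_gen prec_DFS
       \<and> search_extends prec_gen prec_MNS
       \<and> search_extends prec_BFS prec_LBFS
       \<and> search_extends prec_DFS prec_LDFS
       \<and> search_extends prec_MNS prec_LBFS
       \<and> search_extends prec_MNS prec_LDFS
       \<and> search_extends prec_MNS prec_MCS"
  using l1 l2 l3 l4 l5 l6 l7 l8 by blast

end
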